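(* Let $P_k$ denote the $k$-th Legendre polynomial, $k\in\mathbb N$. For every $n\in\mathbb N$, $j\in\{1,\dots,n\}$, $\mathfrak t_n\in\mathbb T(n)$, $\boldsymbol\varphi\in[0,\pi]^{n-1}$, $u\in S^2$, unit vector $\xi\in\mathbb R^3$, and every measurable $\mathrm B:S^2\to\mathbb{SO}(3)$ with $\mathrm B(u)e_3=u$, $$\int_{(0,2\pi)^{n-1}}P_k\big(\mathrm B(u)\mathrm O^*_{j,n}(\mathfrak t_n,\boldsymbol\varphi,\boldsymbol\theta)e_3\cdot\xi\big)\,u_{(0,2\pi)}^{\otimes(n-1)}(d\boldsymbol\theta)=P_k(u\cdot\xi)\,f^{(k)}_{j,n}(\mathfrak t_n,\boldsymbol\varphi),$$ where $f^{(k)}_{1,1}\equiv1$ and, for $n\ge2$, $f^{(k)}_{j,n}(\mathfrak t_n,\boldsymbol\varphi)=f^{(k)}_{j,n_l}(\mathfrak t_n^l,\boldsymbol\varphi^l)P_k(\cos\varphi_{n-1})$ for $j\le n_l$ and $f^{(k)}_{j,n}(\mathfrak t_n,\boldsymbol\varphi)=f^{(k)}_{j-n_l,n_r}(\mathfrak t_n^r,\boldsymbol\varphi^r)P_k(\sin\varphi_{n-1})$ for $j>n_l$.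
   Context: $e_3={}^t(0,0,1)$; $u_{(0,2\pi)}^{\otimes(n-1)}$ is the uniform probability on $(0,2\pi)^{n-1}$ (no integral if $n=1$). Trees: a McKean binary tree is a finite rooted tree in which every node has zero or two children, distinguished as left and right; leaves numbered $1,\dots,n$ left to right; $\mathbb T(n)$ those with $n$ leaves, $\mathfrak t_1$ the one-node tree; for $n\ge2$, $\mathfrak t_n^l,\mathfrak t_n^r$ are the subtrees rooted at the left and right child of the root, with $n_l$ and $n_r=n-n_l$ leaves. For $\boldsymbol\varphi=(\varphi_1,\dots,\varphi_{n-1})$: $\boldsymbol\varphi^l=(\varphi_1,\dots,\varphi_{n_l-1})$, $\boldsymbol\varphi^r=(\varphi_{n_l},\dots,\varphi_{n-2})$ (void if $n_l=1$, resp. $n_r=1$), and $\boldsymbol\theta^l,\boldsymbol\theta^r$ likewise for $\boldsymbol\theta\in(0,2\pi)^{n-1}$. $\mathrm M^l(\varphi,\theta)=\begin{pmatrix}-\cos\theta\cos\varphi&\sin\theta&\cos\theta\sin\varphi\\-\sin\theta\cos\varphi&-\cos\theta&\sin\theta\sin\varphi\\ \sin\varphi&0&\cos\varphi\end{pmatrix}$, $\mathrm M^r(\varphi,\theta)=\begin{pmatrix}\sin\theta&\cos\theta\sin\varphi&-\cos\theta\cos\varphi\\-\cos\theta&\sin\theta\sin\varphi&-\sin\theta\cos\varphi\\0&\cos\varphi&\sin\varphi\end{pmatrix}$. $\mathrm O^*_{1,1}\equiv\mathrm{Id}$ and, for $n\ge2$, $\mathrm O^*_{j,n}(\mathfrak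 t_n,\boldsymbol\varphi,\boldsymbol\theta)=\mathrm M^l(\varphi_{n-1},\theta_{n-1})\mathrm O^*_{j,n_l}(\mathfrak t_n^l,\boldsymbol\varphi^l,\boldsymbol\theta^l)$ for $j\le n_l$ and $=\mathrm M^r(\varphi_{n-1},\theta_{n-1})\mathrm O^*_{j-n_l,n_r}(\mathfrak t_n^r,\boldsymbol\varphi^r,\boldsymbol\theta^r)$ for $j>n_l$. *)

theory Defs
  imports "HOL-Analysis.Analysis"
begin

fun legendre :: "nat \<Rightarrow> real \<Rightarrow> real" where
  "legendre 0 x = 1"
| "legendre (Suc 0) x = x"
| "legendre (Suc (Suc m)) x =
     ((2 * real m + 3) * x * legendre (Suc m) x - (real m + 1) * legendre m x) / (real m + 2)"

datatype mtree = Leaf | Node mtree mtree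

fun leaves :: "mtree \<Rightarrow> nat" where
  "leaves Leaf = 1"
| "leaves (Node l r) = leaves l + leaves r"

definition e3 :: "real^3" where "e3 = vector [0, 0, 1]"

definition Ml :: "real \<Rightarrow> real \<Rightarrow> real^3^3" where
  "Ml \<phi> \<theta> = vector [
     vector [- cos \<theta> * cos \<phi>, sin \<theta>, cos \<theta> * sin \<phi>],
     vector [- sin \<theta> * cos \<phi>, - cos \<theta>, sin \<theta> * sin \<phi>],
     vector [sin \<phi>, 0, cos \<phi>]]"

definition Mr :: "real \<Rightarrow> real \<Rightarrow> real^3^3" where
  "Mr \<phi> \<theta> = vector [
     vector [sin \<theta>, cos \<theta> * sin \<phi>, - cos \<theta> * cos \<phi>],
     vector [- cos \<theta>, sin \<theta> * sin \<phi>, - sin \<theta> * cos \<phi>],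
     vector [0, cos \<phi>, sin \<phi>]]"

text \<open>Angle vectors (phi_1,...,phi_(n-1)) are represented as functions nat => real,
  0-based: phi_i (1-based) is  phi (i-1).  For a tree with n leaves the left subtree
  gets the prefix (indices 0..n_l-2, i.e. the same function), the right subtree gets
  phi_(n_l),...,phi_(n-2), i.e. \<lambda>i. phi (i + n_l - 1), and phi_(n-1) is phi (n-2).
  Leaf index j is 1-based.\<close>
fun Ostar :: "mtree \<Rightarrow> nat \<Rightarrow> (nat \<Rightarrow> real) \<Rightarrow> (nat \<Rightarrow> real) \<Rightarrow> real^3^3" where
  "Ostar Leaf j \<phi> \<theta> = mat 1"
| "Ostar (Node l r) j \<phi> \<theta> =
     (let nl = leaves l; n = leaves l + leaves r in
      if j \<le> nl then Ml (\<phi> (n - 2)) (\<theta> (n - 2)) ** Ostar l j \<phi> \<theta>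
      else Mr (\<phi> (n - 2)) (\<theta> (n - 2)) **
           Ostar r (j - nl) (\<lambda>i. \<phi> (i + nl - 1)) (\<lambda>i. \<theta> (i + nl - 1)))"

fun fk :: "nat \<Rightarrow> mtree \<Rightarrow> nat \<Rightarrow> (nat \<Rightarrow> real) \<Rightarrow> real" where
  "fk k Leaf j \<phi> = 1"
| "fk k (Node l r) j \<phi> =
     (let nl = leaves l; n = leaves l + leaves r in
      if j \<le> nl then fk k l j \<phi> * legendre k (cos (\<phi> (n - 2)))
      else fk k r (j - nl) (\<lambda>i. \<phi> (i + nl - 1)) * legendre k (sin (\<phi> (n - 2))))"

definition SO3 :: "(real^3^3) set" where
  "SO3 = {A. orthogonal_matrix A \<and> det A = 1}"

definition unif_angles :: "nat \<Rightarrow> (nat \<Rightarrow> real) measure" where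
  "unif_angles n = PiM {..<n - 1} (\<lambda>_. uniform_measure lborel {0<..<2*pi})"

end

theory Submission
  imports Defs "HOL-Probability.Infinite_Product_Measure"
begin


fun Lg :: "nat \<Rightarrow> complex \<Rightarrow> complex \<Rightarrow> complex" where
  "Lg 0 p R = 1"
| "Lg (Suc 0) p R = p"
| "Lg (Suc (Suc m)) p R = ((2* of_nat m+3)*p*Lg (Suc m) p R - (of_nat m+1)*(p^2 - R)*Lg m p R)/(of_nat m+2)"

lemma sc_add: "sin (z::complex)^2 + cos z^2 = 1"
  by (rule sin_cos_squared_add)

lemma K:
  fixes p q r :: complex
  shows "integral {0..2*pi} (\<lambda>\<theta>::real. (p + q * cos (of_real \<theta>) + r * sin (of_real \<theta>)) ^ k)
        = of_real (2*pi) * Lg k p (q^2+r^2)"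
proof -
  define F where "F = (\<lambda>z::complex. p + q * cos z + r * sin z)"
  define Fd where "Fd = (\<lambda>z::complex. - q * sin z + r * cos z)"
  define R where "R = q^2 + r^2"
  define I where "I = (\<lambda>m. integral {0..2*pi} (\<lambda>\<theta>::real. F (of_real \<theta>) ^ m))"
  have cF: "continuous_on UNIV (\<lambda>\<theta>::real. F (of_real \<theta>) ^ m)" for m
    unfolding F_def by (intro continuous_intros)
  have intg: "(\<lambda>\<theta>::real. F (of_real \<theta>) ^ m) integrable_on {0..2*pi}" for m
    by (rule integrable_continuous_interval) (rule continuous_on_subset[OF cF], auto)
  have hI: "((\<lambda>\<theta>::real. F (of_real \<theta>) ^ m) has_integral I m) {0..2*pi}" for m
    unfolding I_def using intg by (rule integrable_integral)
  have sq: "Fd z ^ 2 = R - (F z - p)^2" for z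
  proof -
    have "Fd z ^ 2 + (F z - p)^2 = R"
      using sc_add[of z] unfolding F_def Fd_def R_def by algebra
    then show ?thesis by (simp add: eq_diff_eq)
  qed
  have per: "F (of_real (2*pi)) = F 0" "Fd (of_real (2*pi)) = Fd 0"
    unfolding F_def Fd_def by (simp_all add: cos_of_real[symmetric] sin_of_real[symmetric])
  have I0: "I 0 = of_real (2*pi)"
    unfolding I_def by (simp add: scaleR_conv_of_real)
  have dF: "(F has_field_derivative Fd z) (at z)" for z
    unfolding F_def Fd_def by (auto intro!: derivative_eq_intros simp: algebra_simps)
  have dFd: "(Fd has_field_derivative (p - F z)) (at z)" for z
    unfolding F_def Fd_def by (auto intro!: derivative_eq_intros simp: algebra_simps)
  have vFd: "((\<lambda>x::real. Fd (of_real x)) has_vector_derivative (p - F (of_real x))) (at x within {0..2*pi})" for x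
  proof -
    show ?thesis by (rule has_vector_derivative_real_field[OF dFd])
  qed
  have "((\<lambda>x::real. p - F (of_real x)) has_integral (Fd (of_real (2*pi)) - Fd (of_real 0))) {0..2*pi}"
    by (rule fundamental_theorem_of_calculus) (auto intro: vFd)
  then have "((\<lambda>x::real. p - F (of_real x)) has_integral 0) {0..2*pi}"
    using per by simp
  moreover have "((\<lambda>x::real. p - F (of_real x)) has_integral ((2*pi) *\<^sub>R p - I 1)) {0..2*pi}"
    using has_integral_diff[OF has_integral_const_real[of p 0 "2*pi"] hI[of 1]]
    by simp
  ultimately have "(2*pi) *\<^sub>R p - I 1 = 0"
    using has_integral_unique by blast
  then have I1: "I 1 = of_real (2*pi) * p"
    by (simp add: scaleR_conv_of_real)
  have rec: "of_nat (m+2) * I (m+2) = (2* of_nat m+3) * p * I (m+1) - (of_nat m+1)*(p^2 - R) * I m" for m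
  proof -
    define G where "G = (\<lambda>z. F z ^ Suc m * Fd z)"
    define g' where "g' = (\<lambda>x::real. (of_nat m + 1) * (R - p^2) * F (of_real x)^m
         + (2 * of_nat m+3)*p * F (of_real x)^(m+1) - (of_nat m+2) * F (of_real x)^(m+2))"
    have dG: "((\<lambda>x::real. G (of_real x)) has_vector_derivative g' x) (at x within {0..2*pi})" for x
    proof -
      have "(G has_field_derivative
         ((1 + of_nat m) * (Fd (of_real x) * F (of_real x) ^ m)) * Fd (of_real x) + (p - F (of_real x)) * F (of_real x) ^ Suc m) (at (of_real x))"
        unfolding G_def by (rule DERIV_mult[OF DERIV_power_Suc[OF dF] dFd])
      moreover have "((1 + of_nat m) * (Fd (of_real x) * F (of_real x) ^ m)) * Fd (of_real x) + (p - F (of_real x)) * F (of_real x) ^ Suc m = g' x"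
      proof -
        have "((1 + of_nat m) * (Fd (of_real x) * F (of_real x) ^ m)) * Fd (of_real x)
            = (1 + of_nat m) * F (of_real x)^m * (R - (F (of_real x) - p)^2)"
          using sq[of "of_real x"] by (simp add: power2_eq_square mult.assoc mult.left_commute)
        then show ?thesis unfolding g'_def by (simp add: algebra_simps power2_eq_square)
      qed
      ultimately show ?thesis by (metis has_vector_derivative_real_field)
    qed
    have "(g' has_integral (G (of_real (2*pi)) - G (of_real 0))) {0..2*pi}"
      by (rule fundamental_theorem_of_calculus) (auto intro: dG)
    then have h0: "(g' has_integral 0) {0..2*pi}"
      using per unfolding G_def by simp
    have h1: "(g' has_integral ((of_nat m + 1) * (R - p^2) * I m + (2* of_nat m+3)*p * I (m+1) - (of_nat m+2) * I (m+2))) {0..2*pi}"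
      unfolding g'_def
      by (intro has_integral_diff has_integral_add has_integral_mult_right hI)
    have "(of_nat m + 1) * (R - p^2) * I m + (2* of_nat m+3)*p * I (m+1) - (of_nat m+2) * I (m+2) = 0"
      using has_integral_unique[OF h1 h0] .
    then show ?thesis by (simp add: algebra_simps)
  qed
  have "I k = of_real (2*pi) * Lg k p R \<and> I (Suc k) = of_real (2*pi) * Lg (Suc k) p R"
  proof (induction k)
    case 0 then show ?case using I0 I1 by simp
  next
    case (Suc m)
    have "I (Suc (Suc m)) = ((2 * of_nat m+3) * p * I (m+1) - (of_nat m+1)*(p^2 - R) * I m) / of_nat (m+2)"
    proof -
      have nz: "(of_nat (m+2)::complex) \<noteq> 0" by (simp only: of_nat_eq_0_iff)
      have "I (Suc (Suc m)) = (of_nat (m+2) * I (m+2)) / of_nat (m+2)" using nz by simp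
      also have "\<dots> = ((2 * of_nat m+3) * p * I (m+1) - (of_nat m+1)*(p^2 - R) * I m) / of_nat (m+2)"
        by (simp only: rec)
      finally show ?thesis .
    qed
    then show ?case using Suc by (simp add: algebra_simps)
  qed
  then have "I k = of_real (2*pi) * Lg k p R" by blast
  then show ?thesis unfolding I_def F_def R_def .
qed



lemma Lg_hom: "Lg k (c*p) (c^2*R) = c^k * Lg k p R"
proof -
  have "Lg k (c*p) (c^2*R) = c^k * Lg k p R \<and> Lg (Suc k) (c*p) (c^2*R) = c^(Suc k) * Lg (Suc k) p R"
  proof (induction k)
    case 0 then show ?case by simp
  next
    case (Suc m)
    have "Lg (Suc (Suc m)) (c*p) (c^2*R) = ((2 * of_nat m+3)*(c*p)*(c^(Suc m) * Lg (Suc m) p R)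
          - (of_nat m+1)*((c*p)^2 - c^2*R)*(c^m * Lg m p R))/(of_nat m+2)"
      using Suc by simp
    also have "\<dots> = c^(Suc (Suc m)) * (((2 * of_nat m+3)*p*Lg (Suc m) p R - (of_nat m+1)*(p^2 - R)*Lg m p R)/(of_nat m+2))"
    proof -
      have "(2 * of_nat m+3)*(c*p)*(c^(Suc m) * Lg (Suc m) p R)
          - (of_nat m+1)*((c*p)^2 - c^2*R)*(c^m * Lg m p R)
          = c^(Suc (Suc m)) * ((2 * of_nat m+3)*p*Lg (Suc m) p R - (of_nat m+1)*(p^2 - R)*Lg m p R)"
        by (simp add: algebra_simps power2_eq_square)
      then show ?thesis by (simp add: times_divide_eq_right)
    qed
    finally show ?case using Suc by simp
  qed
  then show ?thesis by blast
qed

lemma legendre_Lg: "complex_of_real (legendre k x) = Lg k (of_real x) (of_real x^2 - 1)"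
proof -
  have "complex_of_real (legendre k x) = Lg k (of_real x) (of_real x^2 - 1) \<and>
        complex_of_real (legendre (Suc k) x) = Lg (Suc k) (of_real x) (of_real x^2 - 1)"
  proof (induction k)
    case 0 then show ?case by simp
  next
    case (Suc m)
    have "complex_of_real (legendre (Suc (Suc m)) x) =
       ((2 * of_nat m + 3) * of_real x * of_real (legendre (Suc m) x) - (of_nat m + 1) * of_real (legendre m x)) / (of_nat m + 2)"
      by simp
    also have "\<dots> = Lg (Suc (Suc m)) (of_real x) (of_real x^2 - 1)"
      using Suc by simp
    finally show ?case using Suc by simp
  qed
  then show ?thesis by blast
qed



lemma Kc:
  fixes p q r :: complex
  assumes "q^2 + r^2 = R"
  shows "integral {0..2*pi} (\<lambda>\<theta>::real. (p + q * cos (of_real \<theta>) + r * sin (of_real \<theta>)) ^ k)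
        = of_real (2*pi) * Lg k p R"
  using K[of p q r k] assms by simp

lemma legendre_cont: "continuous_on S (legendre k)"
proof -
  have "continuous_on S (legendre k) \<and> continuous_on S (legendre (Suc k))"
  proof (induction k)
    case 0 then show ?case by (simp add: continuous_on_const continuous_on_id)
  next
    case (Suc m)
    then have "continuous_on S (\<lambda>x. ((2 * real m + 3) * x * legendre (Suc m) x - (real m + 1) * legendre m x) / (real m + 2))"
      by (intro continuous_intros) auto
    then show ?case using Suc by simp
  qed
  then show ?thesis by blast
qed

lemma legendre_cont':
  assumes "continuous_on S f" shows "continuous_on S (\<lambda>x. legendre k (f x))"
  using continuous_on_compose[OF assms legendre_cont] by (simp add: o_def)

lemma addition_thm:
  fixes a b w1 w2 w3 :: real
  assumes ab: "a^2+b^2=1" and w: "w1^2+w2^2+w3^2=1"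
  shows "integral {0..2*pi} (\<lambda>\<theta>. legendre k (a*w3 + b*w1* cos \<theta> + b*w2* sin \<theta>))
       = 2*pi * legendre k a * legendre k w3"
proof -
  define y where "y = (\<lambda>\<theta>::real. a*w3 + b*w1* cos \<theta> + b*w2* sin \<theta>)"
  define E1 where "E1 = (\<lambda>\<theta>::real. - w1* sin \<theta> + w2* cos \<theta>)"
  define E2 where "E2 = (\<lambda>\<theta>::real. a*w1* cos \<theta> + a*w2* sin \<theta> - b*w3)"
  define \<Phi> where "\<Phi> = (\<lambda>\<theta> t::real. (complex_of_real (y \<theta>) + (\<i> * of_real (E1 \<theta>)) * cos (of_real t)
        + (\<i> * of_real (E2 \<theta>)) * sin (of_real t)) ^ k)"
  define \<mu> where "\<mu> = (\<lambda>t::real. complex_of_real a - \<i> * of_real b * sin (of_real t))"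
  define P where "P = (\<lambda>t::real. of_real w3 * \<mu> t)"
  define Q where "Q = (\<lambda>t::real. complex_of_real (b*w1) + \<i> * of_real w2 * cos (of_real t) + \<i> * of_real (a*w1) * sin (of_real t))"
  define Rr where "Rr = (\<lambda>t::real. complex_of_real (b*w2) - \<i> * of_real w1 * cos (of_real t) + \<i> * of_real (a*w2) * sin (of_real t))"
  define Lw where "Lw = legendre k w3"
  define La where "La = legendre k a"
  have frame: "E1 \<theta>^2 + E2 \<theta>^2 = 1 - y \<theta>^2" for \<theta>
  proof -
    have "sin \<theta>^2 + cos \<theta>^2 = 1" by simp
    then show ?thesis using ab w unfolding E1_def E2_def y_def by algebra
  qed
  have step1: "integral {0..2*pi} (\<Phi> \<theta>) = of_real (2*pi) * of_real (legendre k (y \<theta>))" for \<theta>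
  proof -
    have "(\<i> * complex_of_real (E1 \<theta>))^2 + (\<i> * complex_of_real (E2 \<theta>))^2 = (of_real (y \<theta>))^2 - 1"
    proof -
      have "complex_of_real (E1 \<theta>^2 + E2 \<theta>^2) = complex_of_real (1 - y \<theta>^2)" using frame by simp
      then show ?thesis by (simp add: power_mult_distrib algebra_simps)
    qed
    then have "integral {0..2*pi} (\<Phi> \<theta>) = of_real (2*pi) * Lg k (of_real (y \<theta>)) (of_real (y \<theta>)^2 - 1)"
      unfolding \<Phi>_def by (rule Kc)
    then show ?thesis by (simp only: legendre_Lg)
  qed
  have step2: "integral {0..2*pi} (\<lambda>\<theta>. \<Phi> \<theta> t) = of_real (2*pi) * (\<mu> t ^ k * of_real Lw)" for t
  proof -
    have eq: "\<Phi> \<theta> t = (P t + Q t * cos (of_real \<theta>) + Rr t * sin (of_real \<theta>))^k" for \<theta>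
    proof -
      have "complex_of_real (y \<theta>) + (\<i> * of_real (E1 \<theta>)) * cos (of_real t) + (\<i> * of_real (E2 \<theta>)) * sin (of_real t)
          = P t + Q t * cos (of_real \<theta>) + Rr t * sin (of_real \<theta>)"
        unfolding P_def Q_def Rr_def \<mu>_def y_def E1_def E2_def
        by (simp add: cos_of_real sin_of_real) (simp add: algebra_simps)
      then show ?thesis unfolding \<Phi>_def by simp
    qed
    have "Q t^2 + Rr t^2 = \<mu> t^2 * (of_real w3^2 - 1)"
    proof -
      have s: "sin (complex_of_real t)^2 + cos (complex_of_real t)^2 = 1" by simp
      have ab': "complex_of_real a^2 + of_real b^2 = 1"
      proof - have "complex_of_real (a^2+b^2) = 1" using ab by simp then show ?thesis by simp qed
      have w': "complex_of_real w1^2 + of_real w2^2 + of_real w3^2 = 1"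
      proof - have "complex_of_real (w1^2+w2^2+w3^2) = 1" using w by simp then show ?thesis by simp qed
      have i2: "\<i>^2 = -1" by simp
      show ?thesis using s ab' w' i2 unfolding Q_def Rr_def \<mu>_def of_real_mult by algebra
    qed
    then have "integral {0..2*pi} (\<lambda>\<theta>. (P t + Q t * cos (of_real \<theta>) + Rr t * sin (of_real \<theta>))^k) = of_real (2*pi) * Lg k (P t) (\<mu> t^2 * (of_real w3^2 - 1))"
      by (rule Kc)
    then have "integral {0..2*pi} (\<lambda>\<theta>. \<Phi> \<theta> t) = of_real (2*pi) * Lg k (\<mu> t * of_real w3) (\<mu> t^2 * (of_real w3^2 - 1))"
      unfolding eq P_def by (simp only: mult.commute)
    also have "\<dots> = of_real (2*pi) * (\<mu> t ^ k * of_real Lw)"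
      unfolding Lg_hom Lw_def legendre_Lg ..
    finally show ?thesis .
  qed
  have step3: "integral {0..2*pi} (\<lambda>t. \<mu> t ^ k) = of_real (2*pi) * of_real La"
  proof -
    have "integral {0..2*pi} (\<lambda>t. \<mu> t ^ k) =
        integral {0..2*pi} (\<lambda>t::real. (complex_of_real a + 0 * cos (of_real t) + (- \<i> * of_real b) * sin (of_real t))^k)"
      unfolding \<mu>_def by (simp add: algebra_simps)
    also have "\<dots> = of_real (2*pi) * Lg k (of_real a) (of_real a^2 - 1)"
    proof (rule Kc)
      have h: "complex_of_real a^2 + of_real b^2 = 1"
      proof - have "complex_of_real (a^2+b^2) = 1" using ab by simp then show ?thesis by simp qed
      have "(- \<i> * complex_of_real b)^2 = - ((complex_of_real b)^2)" by (simp add: power_mult_distrib)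
      then show "0^2 + (- \<i> * complex_of_real b)^2 = complex_of_real a^2 - 1"
        using h by (simp add: eq_diff_eq algebra_simps)
    qed
    finally show ?thesis unfolding La_def legendre_Lg .
  qed
  have cont: "continuous_on (cbox (0,0) (2*pi,2*pi)) (\<lambda>(x,t). \<Phi> x t)"
    unfolding \<Phi>_def y_def E1_def E2_def case_prod_unfold
    by (intro continuous_intros)
  have swap: "integral {0..2*pi} (\<lambda>x. integral {0..2*pi} (\<Phi> x)) =
              integral {0..2*pi} (\<lambda>t. integral {0..2*pi} (\<lambda>x. \<Phi> x t))"
    using integral_swap_continuous[OF cont] by (simp add: cbox_interval)
  have "complex_of_real (2*pi) * of_real (integral {0..2*pi} (\<lambda>\<theta>. legendre k (y \<theta>)))
      = integral {0..2*pi} (\<lambda>x. integral {0..2*pi} (\<Phi> x))"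
  proof -
    have ci: "(\<lambda>\<theta>. legendre k (y \<theta>)) integrable_on {0..2*pi}"
      unfolding y_def by (intro integrable_continuous_interval legendre_cont' continuous_intros)
    have "integral {0..2*pi} (\<lambda>x. integral {0..2*pi} (\<Phi> x))
        = integral {0..2*pi} (\<lambda>x. of_real (legendre k (y x)) * of_real (2*pi))"
      by (rule integral_cong) (subst step1, rule mult.commute)
    also have "\<dots> = integral {0..2*pi} (\<lambda>x. of_real (legendre k (y x))) * of_real (2*pi)"
      by (rule integral_mult_left)
    also have "integral {0..2*pi} (\<lambda>x. complex_of_real (legendre k (y x))) = of_real (integral {0..2*pi} (\<lambda>\<theta>. legendre k (y \<theta>)))"
      using integral_unique[OF has_integral_of_real[OF integrable_integral[OF ci]]] .
    finally show ?thesis by (simp add: mult.commute)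
  qed
  also have "\<dots> = integral {0..2*pi} (\<lambda>t. \<mu> t ^ k * (of_real (2*pi) * of_real Lw))"
    unfolding swap by (rule integral_cong) (subst step2, simp only: ac_simps)
  also have "\<dots> = of_real (2*pi) * of_real La * (of_real (2*pi) * of_real Lw)"
    by (simp only: integral_mult_left step3)
  finally have "complex_of_real (integral {0..2*pi} (\<lambda>\<theta>. legendre k (y \<theta>))) = of_real (2*pi * La * Lw)"
    by (simp add: algebra_simps)
  then show ?thesis unfolding y_def La_def Lw_def of_real_eq_iff .
qed



lemma mv_inner: "((M::real^3^3) *v x) \<bullet> y = x \<bullet> (transpose M *v y)"
  by (simp add: inner_vec_def matrix_vector_mult_def transpose_def sum_3 algebra_simps)

lemma orth_inner:
  fixes A :: "real^3^3"
  assumes "orthogonal_matrix A"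
  shows "(A *v x) \<bullet> (A *v y) = x \<bullet> y"
proof -
  have "transpose A ** A = mat 1" using assms by (simp add: orthogonal_matrix)
  then show ?thesis unfolding mv_inner matrix_vector_mul_assoc by simp
qed


lemma inner3: "(x::real^3) \<bullet> y = x$1*y$1 + x$2*y$2 + x$3*y$3"
  by (simp add: inner_vec_def sum_3)

definition U :: "real measure" where "U = uniform_measure lborel {0<..<2*pi}"

lemma unif_integral:
  fixes h :: "real \<Rightarrow> real"
  assumes c: "continuous_on UNIV h"
  shows "integral\<^sup>L U h = integral {0..2*pi} h / (2*pi)"
proof -
  have A: "{0<..<2*pi} \<in> sets lborel" by simp
  have dens: "U = density lborel (\<lambda>x. ennreal (indicator {0<..<2*pi} x / (2*pi)))"
    unfolding U_def uniform_measure_def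
    by (intro arg_cong[where f="density lborel"] ext)
       (simp add: divide_ennreal[symmetric] ennreal_indicator)
  have hm: "h \<in> borel_measurable borel"
    by (rule borel_measurable_continuous_onI[OF c])
  have "integral\<^sup>L U h = (\<integral>x. (indicator {0<..<2*pi} x / (2*pi)) *\<^sub>R h x \<partial>lborel)"
    unfolding dens by (rule integral_density) (auto simp: hm)
  also have "\<dots> = (\<integral>x. indicator {0<..<2*pi} x *\<^sub>R h x \<partial>lborel) / (2*pi)"
    by (simp add: divide_simps)
  also have "(\<integral>x. indicator {0<..<2*pi} x *\<^sub>R h x \<partial>lborel) = (LINT x:{0<..<2*pi}|lborel. h x)"
    by (simp add: set_lebesgue_integral_def)
  also have "\<dots> = integral {0<..<2*pi} h"
  proof (rule set_borel_integral_eq_integral(2))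
    have "set_integrable lborel {0..2*pi} h"
      by (rule borel_integrable_atLeastAtMost') (rule continuous_on_subset[OF c], auto)
    then show "set_integrable lborel {0<..<2*pi} h"
      by (rule set_integrable_subset) auto
  qed
  also have "\<dots> = integral {0..2*pi} h"
    by (simp add: integral_open_interval_real)
  finally show ?thesis .
qed

lemma circle_gen:
  fixes A :: "real^3^3" and M :: "real \<Rightarrow> real^3^3"
  assumes orth: "orthogonal_matrix A" and xi: "norm \<xi> = 1"
    and ab: "a^2 + b^2 = 1"
    and Me: "\<And>\<theta>. M \<theta> *v e3 = vector [b * cos \<theta>, b * sin \<theta>, a]"
  shows "integral\<^sup>L U (\<lambda>\<theta>. legendre k (((A ** M \<theta>) *v e3) \<bullet> \<xi>))
       = legendre k ((A *v e3) \<bullet> \<xi>) * legendre k a"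
proof -
  define w where "w = transpose A *v \<xi>"
  have "orthogonal_matrix (transpose A)" using orth by simp
  then have "w \<bullet> w = \<xi> \<bullet> \<xi>" unfolding w_def by (rule orth_inner)
  also have "\<dots> = 1" using xi by (simp add: norm_eq_1)
  finally have w1: "w$1^2 + w$2^2 + w$3^2 = 1" by (simp add: inner3 power2_eq_square)
  have eq: "((A ** M \<theta>) *v e3) \<bullet> \<xi> = a * w$3 + b * w$1 * cos \<theta> + b * w$2 * sin \<theta>" for \<theta>
  proof -
    have "((A ** M \<theta>) *v e3) \<bullet> \<xi> = (M \<theta> *v e3) \<bullet> w"
      unfolding matrix_vector_mul_assoc[symmetric] w_def by (rule mv_inner)
    then show ?thesis by (simp add: Me inner3 algebra_simps)
  qed
  have eq2: "(A *v e3) \<bullet> \<xi> = w$3"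
    unfolding mv_inner w_def[symmetric] by (simp add: inner3 e3_def)
  have "integral\<^sup>L U (\<lambda>\<theta>. legendre k (((A ** M \<theta>) *v e3) \<bullet> \<xi>))
      = integral\<^sup>L U (\<lambda>\<theta>. legendre k (a * w$3 + b * w$1 * cos \<theta> + b * w$2 * sin \<theta>))"
    by (simp only: eq)
  also have "\<dots> = integral {0..2*pi} (\<lambda>\<theta>. legendre k (a * w$3 + b * w$1 * cos \<theta> + b * w$2 * sin \<theta>)) / (2*pi)"
    by (rule unif_integral) (intro legendre_cont' continuous_intros)
  also have "\<dots> = legendre k a * legendre k (w$3)"
    using addition_thm[OF ab w1, of k] by simp
  finally show ?thesis unfolding eq2 by simp
qed

lemma circle_Ml:
  fixes A :: "real^3^3"
  assumes "orthogonal_matrix A" "norm \<xi> = 1"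
  shows "integral\<^sup>L U (\<lambda>\<theta>. legendre k (((A ** Ml \<phi> \<theta>) *v e3) \<bullet> \<xi>))
       = legendre k ((A *v e3) \<bullet> \<xi>) * legendre k (cos \<phi>)"
  by (rule circle_gen[OF assms, where b="sin \<phi>"])
     (auto simp: Ml_def e3_def vec_eq_iff forall_3 matrix_vector_mult_def sum_3)

lemma circle_Mr:
  fixes A :: "real^3^3"
  assumes "orthogonal_matrix A" "norm \<xi> = 1"
  shows "integral\<^sup>L U (\<lambda>\<theta>. legendre k (((A ** Mr \<phi> \<theta>) *v e3) \<bullet> \<xi>))
       = legendre k ((A *v e3) \<bullet> \<xi>) * legendre k (sin \<phi>)"
  by (rule circle_gen[OF assms, where b="- cos \<phi>"])
     (auto simp: Mr_def e3_def vec_eq_iff forall_3 matrix_vector_mult_def sum_3)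


lemma probU: "prob_space U"
  unfolding U_def by (rule prob_space_uniform_measure) auto

interpretation UP: product_sigma_finite "\<lambda>_::nat. U"
  unfolding product_sigma_finite_def using prob_space_imp_sigma_finite[OF probU] by simp

lemma probPi: "prob_space (PiM K (\<lambda>_::nat. U))"
  by (rule prob_space_PiM) (rule probU)

lemma sets_U: "sets U = sets borel"
  unfolding U_def by simp

lemma coord_meas: "(\<lambda>\<theta>. \<theta> m) \<in> borel_measurable (PiM K (\<lambda>_::nat. U))"
proof (cases "m \<in> K")
  case True
  have "(\<lambda>\<theta>. \<theta> m) \<in> measurable (PiM K (\<lambda>_::nat. U)) U"
    using True by (rule measurable_component_singleton)
  then show ?thesis using sets_U measurable_cong_sets[OF refl sets_U] by blast
next
  case False
  have "\<And>\<theta>. \<theta> \<in> space (PiM K (\<lambda>_::nat. U)) \<Longrightarrow> \<theta> m = undefined"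
    using False by (auto simp: space_PiM PiE_def extensional_def)
  then show ?thesis using measurable_cong[of "PiM K (\<lambda>_::nat. U)" "\<lambda>\<theta>. \<theta> m" "\<lambda>_. undefined" borel]
    by simp
qed

lemma sub_integral:
  fixes g :: "(nat \<Rightarrow> real) \<Rightarrow> real"
  assumes fin: "finite K" and LK: "L \<subseteq> K"
    and dep: "\<And>y y'. (\<And>i. i \<in> L \<Longrightarrow> y i = y' i) \<Longrightarrow> g y = g y'"
    and int: "integrable (PiM K (\<lambda>_. U)) g"
  shows "integral\<^sup>L (PiM K (\<lambda>_. U)) g = integral\<^sup>L (PiM L (\<lambda>_. U)) g"
proof -
  have KL: "K = L \<union> (K - L)" using LK by auto
  have fL: "finite L" using fin LK finite_subset by blast
  have int': "integrable (PiM (L \<union> (K - L)) (\<lambda>_. U)) g" using int KL by simp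
  have "integral\<^sup>L (PiM K (\<lambda>_. U)) g = integral\<^sup>L (PiM (L \<union> (K - L)) (\<lambda>_. U)) g"
    using KL by simp
  also have "\<dots> = (\<integral>x. (\<integral>y. g (merge L (K - L) (x, y)) \<partial>PiM (K - L) (\<lambda>_. U)) \<partial>PiM L (\<lambda>_. U))"
    by (rule UP.product_integral_fold[OF _ fL _ int']) (use fin in auto)
  also have "\<dots> = (\<integral>x. g x \<partial>PiM L (\<lambda>_. U))"
  proof (rule Bochner_Integration.integral_cong[OF refl])
    fix x
    have "(\<integral>y. g (merge L (K - L) (x, y)) \<partial>PiM (K - L) (\<lambda>_. U)) = (\<integral>y. g x \<partial>PiM (K - L) (\<lambda>_. U))"
      by (rule Bochner_Integration.integral_cong[OF refl], rule dep) (simp add: merge_def)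
    also have "\<dots> = g x"
      using prob_space.prob_space[OF probPi[of "K - L"]] by simp
    finally show "(\<integral>y. g (merge L (K - L) (x, y)) \<partial>PiM (K - L) (\<lambda>_. U)) = g x" .
  qed
  finally show ?thesis .
qed


lemma bounded_integrable:
  fixes f :: "(nat \<Rightarrow> real) \<Rightarrow> real"
  assumes "f \<in> borel_measurable (PiM K (\<lambda>_. U))" "\<And>y. \<bar>f y\<bar> \<le> C"
  shows "integrable (PiM K (\<lambda>_. U)) f"
proof -
  interpret prob_space "PiM K (\<lambda>_. U)" by (rule probPi)
  show ?thesis by (rule integrable_const_bound[where B=C]) (use assms in auto)
qed

lemma step_integral:
  fixes G :: "real \<Rightarrow> (nat \<Rightarrow> real) \<Rightarrow> real" and \<Phi> :: "real \<Rightarrow> real"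
  assumes fin: "finite K0" and m: "m \<notin> K0" and LK: "L \<subseteq> K0"
    and dep: "\<And>x y y'. (\<And>i. i \<in> L \<Longrightarrow> y i = y' i) \<Longrightarrow> G x y = G x y'"
    and meas: "(\<lambda>\<theta>. G (\<theta> m) \<theta>) \<in> borel_measurable (PiM (insert m K0) (\<lambda>_. U))"
    and measK: "\<And>x. G x \<in> borel_measurable (PiM K0 (\<lambda>_. U))"
    and bnd: "\<And>x y. \<bar>G x y\<bar> \<le> C"
    and inner: "\<And>x. integral\<^sup>L (PiM L (\<lambda>_. U)) (G x) = \<Phi> x"
    and \<Phi>m: "\<Phi> \<in> borel_measurable U"
  shows "integral\<^sup>L (PiM (insert m K0) (\<lambda>_. U)) (\<lambda>\<theta>. G (\<theta> m) \<theta>) = integral\<^sup>L U \<Phi>"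
proof -
  have int: "integrable (PiM ({m} \<union> K0) (\<lambda>_. U)) (\<lambda>\<theta>. G (\<theta> m) \<theta>)"
    using bounded_integrable[OF meas bnd] by simp
  have "integral\<^sup>L (PiM (insert m K0) (\<lambda>_. U)) (\<lambda>\<theta>. G (\<theta> m) \<theta>)
      = integral\<^sup>L (PiM ({m} \<union> K0) (\<lambda>_. U)) (\<lambda>\<theta>. G (\<theta> m) \<theta>)" by simp
  also have "\<dots> = (\<integral>x. (\<integral>y. G (merge {m} K0 (x, y) m) (merge {m} K0 (x, y)) \<partial>PiM K0 (\<lambda>_. U)) \<partial>PiM {m} (\<lambda>_. U))"
    by (rule UP.product_integral_fold[OF _ _ fin int]) (use m in auto)
  also have "\<dots> = (\<integral>x. \<Phi> (x m) \<partial>PiM {m} (\<lambda>_. U))"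
  proof (rule Bochner_Integration.integral_cong[OF refl])
    fix x
    have "(\<integral>y. G (merge {m} K0 (x, y) m) (merge {m} K0 (x, y)) \<partial>PiM K0 (\<lambda>_. U))
        = (\<integral>y. G (x m) y \<partial>PiM K0 (\<lambda>_. U))"
    proof (rule Bochner_Integration.integral_cong[OF refl])
      fix y
      have "merge {m} K0 (x, y) m = x m" by (simp add: merge_def)
      moreover have "G (x m) (merge {m} K0 (x, y)) = G (x m) y"
        by (rule dep) (use LK m in \<open>auto simp: merge_def\<close>)
      ultimately show "G (merge {m} K0 (x, y) m) (merge {m} K0 (x, y)) = G (x m) y" by simp
    qed
    also have "\<dots> = integral\<^sup>L (PiM L (\<lambda>_. U)) (G (x m))"
      by (rule sub_integral[OF fin LK dep bounded_integrable[OF measK bnd]])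
    also have "\<dots> = \<Phi> (x m)" by (rule inner)
    finally show "(\<integral>y. G (merge {m} K0 (x, y) m) (merge {m} K0 (x, y)) \<partial>PiM K0 (\<lambda>_. U)) = \<Phi> (x m)" .
  qed
  also have "\<dots> = integral\<^sup>L U \<Phi>"
    by (rule UP.product_integral_singleton[OF \<Phi>m])
  finally show ?thesis .
qed



lemma leaves_pos: "1 \<le> leaves t"
  by (induction t) auto

lemma orth_Ml: "orthogonal_matrix (Ml \<phi> \<theta>)"
  unfolding orthogonal_matrix
  apply (simp add: vec_eq_iff forall_3 Ml_def matrix_matrix_mult_def sum_3 transpose_def mat_def
      power2_eq_square[symmetric] algebra_simps)
  using sin_cos_squared_add[of \<phi>] sin_cos_squared_add[of \<theta>]
  apply (intro conjI)
    apply algebra+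
  done

lemma orth_Mr: "orthogonal_matrix (Mr \<phi> \<theta>)"
  unfolding orthogonal_matrix
  apply (simp add: vec_eq_iff forall_3 Mr_def matrix_matrix_mult_def sum_3 transpose_def mat_def
      power2_eq_square[symmetric] algebra_simps)
  using sin_cos_squared_add[of \<phi>] sin_cos_squared_add[of \<theta>]
  apply (intro conjI)
    apply algebra+
  done


lemma orth_Ostar: "orthogonal_matrix (Ostar t j \<phi> \<theta>)"
  by (induction t j \<phi> \<theta> rule: Ostar.induct)
     (auto simp: Let_def orthogonal_matrix_id intro!: orthogonal_matrix_mul orth_Ml orth_Mr)

lemma Ostar_dep:
  "(\<And>i. i < leaves t - 1 \<Longrightarrow> \<theta> i = \<theta>' i) \<Longrightarrow> Ostar t j \<phi> \<theta> = Ostar t j \<phi> \<theta>'"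
proof (induction t arbitrary: j \<phi> \<theta> \<theta>')
  case Leaf then show ?case by simp
next
  case (Node l r)
  have pl: "1 \<le> leaves l" and pr: "1 \<le> leaves r" by (rule leaves_pos)+
  have t: "\<theta> (leaves l + leaves r - 2) = \<theta>' (leaves l + leaves r - 2)"
    using Node.prems pl pr by simp
  have L: "Ostar l j \<phi> \<theta> = Ostar l j \<phi> \<theta>'"
    by (rule Node.IH(1)) (use Node.prems pl pr in simp)
  have R: "Ostar r (j - leaves l) (\<lambda>i. \<phi> (i + leaves l - 1)) (\<lambda>i. \<theta> (i + leaves l - 1))
        = Ostar r (j - leaves l) (\<lambda>i. \<phi> (i + leaves l - 1)) (\<lambda>i. \<theta>' (i + leaves l - 1))"
    by (rule Node.IH(2)) (use Node.prems pl pr in simp)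
  show ?case using t L R by (simp add: Let_def)
qed

lemma Ml_entry_cont: "continuous_on UNIV (\<lambda>x. Ml \<phi> x $ a $ c)"
proof -
  have "\<forall>a c. continuous_on UNIV (\<lambda>x. Ml \<phi> x $ a $ c)"
    by (simp add: forall_3 Ml_def continuous_intros)
  then show ?thesis by blast
qed

lemma Mr_entry_cont: "continuous_on UNIV (\<lambda>x. Mr \<phi> x $ a $ c)"
proof -
  have "\<forall>a c. continuous_on UNIV (\<lambda>x. Mr \<phi> x $ a $ c)"
    by (simp add: forall_3 Mr_def continuous_intros)
  then show ?thesis by blast
qed

lemma Ostar_entry_meas:
  "(\<lambda>\<theta>. Ostar t j \<phi> (\<lambda>i. \<theta> (i + s)) $ a $ b) \<in> borel_measurable (PiM K (\<lambda>_. U))"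
proof (induction t arbitrary: j \<phi> s a b)
  case Leaf then show ?case by simp
next
  case (Node l r)
  have pl: "1 \<le> leaves l" by (rule leaves_pos)
  show ?case
  proof (cases "j \<le> leaves l")
    case True
    have ml: "(\<lambda>\<theta>. Ml (\<phi> (leaves l + leaves r - 2)) (\<theta> (leaves l + leaves r - 2 + s)) $ a $ c) \<in> borel_measurable (PiM K (\<lambda>_. U))" for c
      by (rule borel_measurable_continuous_on[OF Ml_entry_cont coord_meas])
    show ?thesis using True ml Node.IH(1)
      by (simp add: Let_def matrix_matrix_mult_def sum_3)
  next
    case False
    have ml: "(\<lambda>\<theta>. Mr (\<phi> (leaves l + leaves r - 2)) (\<theta> (leaves l + leaves r - 2 + s)) $ a $ c) \<in> borel_measurable (PiM K (\<lambda>_. U))" for c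
      by (rule borel_measurable_continuous_on[OF Mr_entry_cont coord_meas])
    have eq: "i + leaves l - Suc 0 + s = i + (s + leaves l - Suc 0)" for i
      using pl by simp
    show ?thesis using False ml Node.IH(2)[of _ _ "s + leaves l - 1"]
      by (simp add: Let_def matrix_matrix_mult_def sum_3 eq)
  qed
qed



lemma Me3: "((M::real^3^3) *v e3) $ a = M $ a $ 3"
  by (simp add: matrix_vector_mult_def e3_def sum_3)

lemma inner_expand: "((A ** M) *v e3) \<bullet> (\<xi>::real^3) = (\<Sum>a\<in>UNIV. (\<Sum>c\<in>UNIV. A$a$c * M$c$3) * \<xi>$a)"
  by (simp add: inner_vec_def Me3 matrix_matrix_mult_def)

lemma integrand_meas:
  fixes A :: "real^3^3" and \<xi> :: "real^3"
  shows "(\<lambda>\<theta>. legendre k (((A ** Ostar t j \<phi> (\<lambda>i. \<theta> (i + s))) *v e3) \<bullet> \<xi>)) \<in> borel_measurable (PiM K (\<lambda>_. U))"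
proof -
  have "(\<lambda>\<theta>. (\<Sum>a\<in>UNIV. (\<Sum>c\<in>UNIV. A$a$c * Ostar t j \<phi> (\<lambda>i. \<theta> (i + s))$c$3) * \<xi>$a)) \<in> borel_measurable (PiM K (\<lambda>_. U))"
    by (intro borel_measurable_sum borel_measurable_times borel_measurable_const Ostar_entry_meas)
  then have "(\<lambda>\<theta>. legendre k (\<Sum>a\<in>UNIV. (\<Sum>c\<in>UNIV. A$a$c * Ostar t j \<phi> (\<lambda>i. \<theta> (i + s))$c$3) * \<xi>$a)) \<in> borel_measurable (PiM K (\<lambda>_. U))"
    by (rule borel_measurable_continuous_on[OF legendre_cont])
  moreover have "((A ** Ostar t j \<phi> (\<lambda>i. \<theta> (i + s))) *v e3) \<bullet> \<xi> = (\<Sum>a\<in>UNIV. (\<Sum>c\<in>UNIV. A$a$c * Ostar t j \<phi> (\<lambda>i. \<theta> (i + s))$c$3) * \<xi>$a)" for \<theta>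
    by (rule inner_expand)
  ultimately show ?thesis by simp
qed

lemma cont_meas_U: "continuous_on UNIV f \<Longrightarrow> (f::real \<Rightarrow> real) \<in> borel_measurable U"
  using measurable_cong_sets[OF sets_U refl] borel_measurable_continuous_onI by blast

lemma arg_bound:
  assumes "orthogonal_matrix M" "norm \<xi> = 1"
  shows "\<bar>(M *v e3) \<bullet> \<xi>\<bar> \<le> 1"
proof -
  have "(M *v e3) \<bullet> (M *v e3) = e3 \<bullet> e3" by (rule orth_inner[OF assms(1)])
  also have "\<dots> = 1" by (simp add: e3_def inner3)
  finally have "norm (M *v e3) = 1" by (simp add: norm_eq_1)
  then show ?thesis using Cauchy_Schwarz_ineq2[of "M *v e3" \<xi>] assms(2) by simp
qed

lemma legendre_bound: "\<exists>C. \<forall>x\<in>{-1..1}. \<bar>legendre k x\<bar> \<le> C"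
proof -
  have "compact (legendre k ` {-1..1})"
    by (rule compact_continuous_image[OF legendre_cont compact_Icc])
  then obtain B where "\<forall>y\<in>legendre k ` {-1..1}. norm y \<le> B"
    using compact_imp_bounded bounded_iff by metis
  then show ?thesis by auto
qed



lemma Phi_cont_Ml:
  fixes A :: "real^3^3" and \<xi> :: "real^3"
  shows "continuous_on UNIV (\<lambda>x. legendre k (((A ** Ml \<phi>0 x) *v e3) \<bullet> \<xi>) * c)"
proof -
  have "continuous_on UNIV (\<lambda>x. legendre k (\<Sum>a\<in>UNIV. (\<Sum>b\<in>UNIV. A$a$b * Ml \<phi>0 x $b$3) * \<xi>$a) * c)"
    by (intro continuous_intros legendre_cont' Ml_entry_cont)
  then show ?thesis by (simp only: inner_expand)
qed

lemma Phi_cont_Mr: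
  fixes A :: "real^3^3" and \<xi> :: "real^3"
  shows "continuous_on UNIV (\<lambda>x. legendre k (((A ** Mr \<phi>0 x) *v e3) \<bullet> \<xi>) * c)"
proof -
  have "continuous_on UNIV (\<lambda>x. legendre k (\<Sum>a\<in>UNIV. (\<Sum>b\<in>UNIV. A$a$b * Mr \<phi>0 x $b$3) * \<xi>$a) * c)"
    by (intro continuous_intros legendre_cont' Mr_entry_cont)
  then show ?thesis by (simp only: inner_expand)
qed

lemma bound_ex:
  fixes \<xi> :: "real^3"
  assumes xi: "norm \<xi> = 1"
  obtains C where "\<And>B Q :: real^3^3. orthogonal_matrix B \<Longrightarrow> orthogonal_matrix Q \<Longrightarrow> \<bar>legendre k (((B ** Q) *v e3) \<bullet> \<xi>)\<bar> \<le> C"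
proof -
  obtain C where C: "\<forall>x\<in>{-1..1}. \<bar>legendre k x\<bar> \<le> C" using legendre_bound by blast
  have "\<bar>legendre k (((B ** Q) *v e3) \<bullet> \<xi>)\<bar> \<le> C"
    if "orthogonal_matrix B" "orthogonal_matrix Q" for B Q :: "real^3^3"
  proof -
    have "\<bar>((B ** Q) *v e3) \<bullet> \<xi>\<bar> \<le> 1"
      by (rule arg_bound[OF orthogonal_matrix_mul[OF that] xi])
    then have "((B ** Q) *v e3) \<bullet> \<xi> \<in> {-1..1}" by (auto simp: abs_le_iff)
    then show ?thesis using C by blast
  qed
  then show ?thesis using that by blast
qed

lemma main_gen:
  fixes \<xi> :: "real^3" and A :: "real^3^3"
  assumes xi: "norm \<xi> = 1"
  shows "orthogonal_matrix A \<Longrightarrow> 1 \<le> j \<Longrightarrow> j \<le> leaves t \<Longrightarrow>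
    integral\<^sup>L (PiM {s..<s + (leaves t - 1)} (\<lambda>_. U))
      (\<lambda>\<theta>. legendre k (((A ** Ostar t j \<phi> (\<lambda>i. \<theta> (i + s))) *v e3) \<bullet> \<xi>))
    = legendre k ((A *v e3) \<bullet> \<xi>) * fk k t j \<phi>"
proof (induction t arbitrary: A j \<phi> s)
    case Leaf
    have "prob_space (PiM {s..<s + (leaves Leaf - 1)} (\<lambda>_. U))" by (rule probPi)
    then show ?case by (simp add: prob_space.prob_space)
  next
    case (Node l r)
    define nl where "nl = leaves l"
    define nr where "nr = leaves r"
    have pl: "1 \<le> nl" and pr: "1 \<le> nr" unfolding nl_def nr_def by (rule leaves_pos)+
    define m where "m = s + (nl + nr) - 2"
    define K0 where "K0 = {s..<m}"
    have Keq: "{s..<s + (leaves (Node l r) - 1)} = insert m K0"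
      using pl pr unfolding K0_def m_def nl_def nr_def by auto
    have fin: "finite K0" and mK: "m \<notin> K0" unfolding K0_def by auto
    have idx: "nl + nr - 2 + s = m" unfolding m_def using pl pr by simp
    obtain C where bnd: "\<And>B Q :: real^3^3. orthogonal_matrix B \<Longrightarrow> orthogonal_matrix Q \<Longrightarrow> \<bar>legendre k (((B ** Q) *v e3) \<bullet> \<xi>)\<bar> \<le> C"
      using bound_ex[OF xi] by blast
    show ?case
    proof (cases "j \<le> nl")
      case True
      define G where "G = (\<lambda>x (y::nat\<Rightarrow>real). legendre k (((A ** Ml (\<phi> (nl + nr - 2)) x ** Ostar l j \<phi> (\<lambda>i. y (i + s))) *v e3) \<bullet> \<xi>))"
      define \<Phi> where "\<Phi> = (\<lambda>x. legendre k (((A ** Ml (\<phi> (nl + nr - 2)) x) *v e3) \<bullet> \<xi>) * fk k l j \<phi>)"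
      have feq: "(\<lambda>\<theta>. legendre k (((A ** Ostar (Node l r) j \<phi> (\<lambda>i. \<theta> (i + s))) *v e3) \<bullet> \<xi>)) = (\<lambda>\<theta>. G (\<theta> m) \<theta>)"
        using True idx by (simp add: G_def Let_def nl_def[symmetric] nr_def[symmetric] matrix_mul_assoc)
      have "integral\<^sup>L (PiM (insert m K0) (\<lambda>_. U)) (\<lambda>\<theta>. G (\<theta> m) \<theta>) = integral\<^sup>L U \<Phi>"
      proof (rule step_integral[OF fin mK, where L="{s..<s + (nl - 1)}" and C=C and G=G and \<Phi>=\<Phi>])
        show "{s..<s + (nl - 1)} \<subseteq> K0" unfolding K0_def m_def using pl pr by auto
        show "G x y = G x y'" if "\<And>i. i \<in> {s..<s + (nl - 1)} \<Longrightarrow> y i = y' i" for x y y'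
        proof -
          have "Ostar l j \<phi> (\<lambda>i. y (i + s)) = Ostar l j \<phi> (\<lambda>i. y' (i + s))"
            by (rule Ostar_dep) (use that in \<open>auto simp: nl_def\<close>)
          then show ?thesis unfolding G_def by simp
        qed
        show "(\<lambda>\<theta>. G (\<theta> m) \<theta>) \<in> borel_measurable (PiM (insert m K0) (\<lambda>_. U))"
          unfolding feq[symmetric] by (rule integrand_meas)
        show "G x \<in> borel_measurable (PiM K0 (\<lambda>_. U))" for x
          unfolding G_def by (rule integrand_meas)
        show "\<bar>G x y\<bar> \<le> C" for x y
          unfolding G_def by (rule bnd) (auto intro!: orthogonal_matrix_mul Node.prems orth_Ml orth_Ostar)
        show "integral\<^sup>L (PiM {s..<s + (nl - 1)} (\<lambda>_. U)) (G x) = \<Phi> x" for x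
          unfolding G_def \<Phi>_def nl_def
          by (rule Node.IH(1)) (use Node.prems True in \<open>auto intro!: orthogonal_matrix_mul orth_Ml simp: nl_def\<close>)
        show "\<Phi> \<in> borel_measurable U"
          unfolding \<Phi>_def by (rule cont_meas_U[OF Phi_cont_Ml])
      qed
      also have "\<dots> = integral\<^sup>L U (\<lambda>x. legendre k (((A ** Ml (\<phi> (nl + nr - 2)) x) *v e3) \<bullet> \<xi>)) * fk k l j \<phi>"
        unfolding \<Phi>_def by simp
      also have "\<dots> = legendre k ((A *v e3) \<bullet> \<xi>) * fk k (Node l r) j \<phi>"
        using circle_Ml[OF Node.prems(1) xi] True
        by (simp add: Let_def nl_def[symmetric] nr_def[symmetric])
      finally show ?thesis unfolding Keq feq .
    next
      case False
      define s' where "s' = s + nl - 1"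
      define j' where "j' = j - nl"
      define \<phi>' where "\<phi>' = (\<lambda>i. \<phi> (i + nl - 1))"
      define G where "G = (\<lambda>x (y::nat\<Rightarrow>real). legendre k (((A ** Mr (\<phi> (nl + nr - 2)) x ** Ostar r j' \<phi>' (\<lambda>i. y (i + s'))) *v e3) \<bullet> \<xi>))"
      define \<Phi> where "\<Phi> = (\<lambda>x. legendre k (((A ** Mr (\<phi> (nl + nr - 2)) x) *v e3) \<bullet> \<xi>) * fk k r j' \<phi>')"
      have eqi: "(\<lambda>i. \<theta> (i + nl - 1 + s)) = (\<lambda>i. \<theta> (i + s'))" for \<theta> :: "nat \<Rightarrow> real"
        unfolding s'_def using pl by (simp add: algebra_simps)
      have "Ostar (Node l r) j \<phi> (\<lambda>i. \<theta> (i + s)) = Mr (\<phi> (nl + nr - 2)) (\<theta> m) ** Ostar r j' \<phi>' (\<lambda>i. \<theta> (i + s'))" for \<theta> :: "nat \<Rightarrow> real"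
      proof -
        have "Ostar (Node l r) j \<phi> (\<lambda>i. \<theta> (i + s)) = Mr (\<phi> (nl + nr - 2)) (\<theta> (nl + nr - 2 + s)) ** Ostar r j' \<phi>' (\<lambda>i. \<theta> (i + nl - 1 + s))"
          using False unfolding j'_def \<phi>'_def by (simp add: Let_def nl_def[symmetric] nr_def[symmetric])
        then show ?thesis unfolding eqi idx .
      qed
      then have feq: "(\<lambda>\<theta>. legendre k (((A ** Ostar (Node l r) j \<phi> (\<lambda>i. \<theta> (i + s))) *v e3) \<bullet> \<xi>)) = (\<lambda>\<theta>. G (\<theta> m) \<theta>)"
        by (simp add: G_def matrix_mul_assoc)
      have j'1: "1 \<le> j'" and j'2: "j' \<le> leaves r" using False Node.prems unfolding j'_def nl_def by auto
      have "integral\<^sup>L (PiM (insert m K0) (\<lambda>_. U)) (\<lambda>\<theta>. G (\<theta> m) \<theta>) = integral\<^sup>L U \<Phi>"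
      proof (rule step_integral[OF fin mK, where L="{s'..<s' + (nr - 1)}" and C=C and G=G and \<Phi>=\<Phi>])
        show "{s'..<s' + (nr - 1)} \<subseteq> K0" unfolding K0_def m_def s'_def using pl pr by auto
        show "G x y = G x y'" if "\<And>i. i \<in> {s'..<s' + (nr - 1)} \<Longrightarrow> y i = y' i" for x y y'
        proof -
          have "Ostar r j' \<phi>' (\<lambda>i. y (i + s')) = Ostar r j' \<phi>' (\<lambda>i. y' (i + s'))"
            by (rule Ostar_dep) (use that in \<open>auto simp: nr_def\<close>)
          then show ?thesis unfolding G_def by simp
        qed
        show "(\<lambda>\<theta>. G (\<theta> m) \<theta>) \<in> borel_measurable (PiM (insert m K0) (\<lambda>_. U))"
          unfolding feq[symmetric] by (rule integrand_meas)
        show "G x \<in> borel_measurable (PiM K0 (\<lambda>_. U))" for x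
          unfolding G_def by (rule integrand_meas)
        show "\<bar>G x y\<bar> \<le> C" for x y
          unfolding G_def by (rule bnd) (auto intro!: orthogonal_matrix_mul Node.prems orth_Mr orth_Ostar)
        show "integral\<^sup>L (PiM {s'..<s' + (nr - 1)} (\<lambda>_. U)) (G x) = \<Phi> x" for x
          unfolding G_def \<Phi>_def nr_def
          by (rule Node.IH(2)) (use Node.prems j'1 j'2 in \<open>auto intro!: orthogonal_matrix_mul orth_Mr\<close>)
        show "\<Phi> \<in> borel_measurable U"
          unfolding \<Phi>_def by (rule cont_meas_U[OF Phi_cont_Mr])
      qed
      also have "\<dots> = integral\<^sup>L U (\<lambda>x. legendre k (((A ** Mr (\<phi> (nl + nr - 2)) x) *v e3) \<bullet> \<xi>)) * fk k r j' \<phi>'"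
        unfolding \<Phi>_def by simp
      also have "\<dots> = legendre k ((A *v e3) \<bullet> \<xi>) * fk k (Node l r) j \<phi>"
        using circle_Mr[OF Node.prems(1) xi] False unfolding j'_def \<phi>'_def
        by (simp add: Let_def nl_def[symmetric] nr_def[symmetric])
      finally show ?thesis unfolding Keq feq .
    qed
qed


theorem mainTheorem10:
  fixes k j :: nat and t :: mtree and \<phi> :: "nat \<Rightarrow> real"
    and u \<xi> :: "real^3" and B :: "real^3 \<Rightarrow> real^3^3"
  assumes "1 \<le> j" and "j \<le> leaves t"
    and "\<forall>i < leaves t - 1. \<phi> i \<in> {0..pi}"
    and "u \<in> sphere 0 1" and "norm \<xi> = 1"
    and "B \<in> borel_measurable (restrict_space borel (sphere 0 1))"
    and "\<forall>v \<in> sphere 0 1. B v \<in> SO3"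
    and "B u *v e3 = u"
  shows "(\<integral>\<theta>. legendre k (((B u ** Ostar t j \<phi> \<theta>) *v e3) \<bullet> \<xi>) \<partial>unif_angles (leaves t))
           = legendre k (u \<bullet> \<xi>) * fk k t j \<phi>"
proof -
  have orth: "orthogonal_matrix (B u)" using assms(4,7) by (auto simp: SO3_def)
  have um: "unif_angles (leaves t) = PiM {0..<0 + (leaves t - 1)} (\<lambda>_. U)"
    unfolding unif_angles_def U_def by (simp add: atLeast0LessThan)
  have "integral\<^sup>L (PiM {0..<0 + (leaves t - 1)} (\<lambda>_. U))
      (\<lambda>\<theta>. legendre k (((B u ** Ostar t j \<phi> (\<lambda>i. \<theta> (i + 0))) *v e3) \<bullet> \<xi>))
    = legendre k ((B u *v e3) \<bullet> \<xi>) * fk k t j \<phi>"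
    by (rule main_gen[OF assms(5) orth assms(1,2)])
  then show ?thesis unfolding um assms(8) by simp
qed

end
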